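(* Let $I\subset[0,+\infty)$ be an open interval, $n\in\mathbb{N}$, $\beta\in\{-1,1\}$, $N\ge n$, $\xi\in[0,1]$, $t_0\in I$ and $T>0$ fixed with $t_0+\beta T\in I$. Let $\{\varpi(\tau),\tau\ge0\}$ be a continuous parameter stochastic process whose mean value and variance functions are continuous and such that $\varpi(s)$ and $\varpi(t)$ are independent for all $s\neq t$. Sample it with an equidistant sampling period $T_s$, $m=T/T_s\in\mathbb{N}$. If $\kappa,\mu>-\frac12$, then $$\lim_{m\to\infty}\mathrm{Var}\big[e^{\beta T}_{\varpi,m}(t_0)\big]=0 .$$
   Context: For $a,b>-1$ let $w^{a,b}(t)=t^{b}(1-t)^{a}$, $P_k^{a,b}(t)=\sum_{s=0}^{k}\binom{k+a}{s}\binom{k+b}{k-s}(t-1)^{k-s}t^{s}$, $\|P_k^{a,b}\|^2=\int_0^1 w^{a,b}(P_k^{a,b})^2$. With $q=N-n$, the Jacobi estimator kernel is $$p^{\beta T}(\tau)=\frac{(-1)^n}{(\beta T)^n}\sum_{i=0}^{q}\frac{P_i^{\mu+n,\kappa+n}(\xi)}{\|P_i^{\mu+n,\kappa+n}\|^2}\frac{d^n}{d\tau^n}\Big[w^{\mu+n,\kappa+n}(\tau)P_i^{\mu+n,\kappa+n}(\tau)\Big].$$ Discrete noise error contribution: with nodes $t_i=i/m$ and quadrature weights $w_i/m$ ($i=0,\dots,m$) of a numerical integration method on $[0,1]$, $$e^{\beta T}_{\varpi,m}(t_0)=\sum_{i=0}^{m}\frac{w_i}{m}\,p^{\beta T}(t_i)\,\varpi(t_0+\beta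 Tt_i).$$ Standing assumptions on the rule: $w_i>0$ for $0<i<m$, $w_0,w_m\ge0$, with $w_0=0$ when $\kappa<0$ and $w_m=0$ when $\mu<0$ (so that all terms are finite); the weights are bounded uniformly in $i$ and $m$; and the rule is convergent for the integrand $(p^{\beta T})^2$, i.e. $\sum_{i=0}^m\frac{w_i}{m}(p^{\beta T}(t_i))^2\to\int_0^1(p^{\beta T}(t))^2dt$ as $m\to\infty$. *)

theory Defs
  imports "HOL-Probability.Probability"
begin

definition jweight :: "real \<Rightarrow> real \<Rightarrow> real \<Rightarrow> real" where
  "jweight a b t = t powr b * (1 - t) powr a"

definition jacobiP :: "nat \<Rightarrow> real \<Rightarrow> real \<Rightarrow> real \<Rightarrow> real" where
  "jacobiP k a b t =
     (\<Sum>s=0..k. ((real k + a) gchoose s) * ((real k + b) gchoose (k - s))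
                 * (t - 1) ^ (k - s) * t ^ s)"

definition jnorm2 :: "nat \<Rightarrow> real \<Rightarrow> real \<Rightarrow> real" where
  "jnorm2 k a b = integral {0..1} (\<lambda>t. jweight a b t * (jacobiP k a b t)^2)"

definition nderiv01 :: "nat \<Rightarrow> (real \<Rightarrow> real) \<Rightarrow> real \<Rightarrow> real" where
  "nderiv01 n f = ((\<lambda>g x. vector_derivative g (at x within {0..1})) ^^ n) f"

definition jkernel ::
  "nat \<Rightarrow> nat \<Rightarrow> real \<Rightarrow> real \<Rightarrow> real \<Rightarrow> real \<Rightarrow> real \<Rightarrow> real \<Rightarrow> real" where
  "jkernel n N \<mu> \<kappa> \<xi> \<beta> T \<tau> =
     (-1) ^ n / (\<beta> * T) ^ n *
     (\<Sum>i=0..N - n. jacobiP i (\<mu> + real n) (\<kappa> + real n) \<xi>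
                     / jnorm2 i (\<mu> + real n) (\<kappa> + real n)
          * nderiv01 n (\<lambda>t. jweight (\<mu> + real n) (\<kappa> + real n) t
                              * jacobiP i (\<mu> + real n) (\<kappa> + real n) t) \<tau>)"

definition noise_err ::
  "nat \<Rightarrow> nat \<Rightarrow> real \<Rightarrow> real \<Rightarrow> real \<Rightarrow> real \<Rightarrow> real \<Rightarrow> (nat \<Rightarrow> nat \<Rightarrow> real)
   \<Rightarrow> (real \<Rightarrow> 'a \<Rightarrow> real) \<Rightarrow> real \<Rightarrow> nat \<Rightarrow> 'a \<Rightarrow> real" where
  "noise_err n N \<mu> \<kappa> \<xi> \<beta> T wq X t0 m x =
     (\<Sum>i=0..m. wq m i / real m * jkernel n N \<mu> \<kappa> \<xi> \<beta> T (real i / real m)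
                 * X (t0 + \<beta> * T * (real i / real m)) x)"

definition variance_of :: "'a measure \<Rightarrow> ('a \<Rightarrow> real) \<Rightarrow> real" where
  "variance_of M X = (LINT x|M. (X x - (LINT y|M. X y))^2)"

end

theory Submission imports Defs begin

lemma (in prob_space) var_sum:
  fixes Y :: "'i \<Rightarrow> 'a \<Rightarrow> real" and c :: "'i \<Rightarrow> real"
  assumes fin: "finite A"
    and meas: "\<And>i. i \<in> A \<Longrightarrow> Y i \<in> borel_measurable M"
    and sq: "\<And>i. i \<in> A \<Longrightarrow> integrable M (\<lambda>x. (Y i x)^2)"
    and ind: "\<And>i j. i \<in> A \<Longrightarrow> j \<in> A \<Longrightarrow> i \<noteq> j \<Longrightarrow> indep_var borel (Y i) borel (Y j)"
  shows "variance_of M (\<lambda>x. \<Sum>i\<in>A. c i * Y i x) = (\<Sum>i\<in>A. (c i)^2 * variance_of M (Y i))"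
proof -
  define Z where "Z i x = Y i x - expectation (Y i)" for i x
  have intY: "integrable M (Y i)" if "i \<in> A" for i
    using square_integrable_imp_integrable[OF meas[OF that] sq[OF that]] .
  have intZ: "integrable M (Z i)" if "i \<in> A" for i
    unfolding Z_def using intY[OF that] by auto
  have EZ: "expectation (Z i) = 0" if "i \<in> A" for i
    unfolding Z_def using intY[OF that] by (simp add: prob_space)
  have Zsq: "(\<lambda>x. Z i x * Z i x) = (\<lambda>x. (Y i x)^2 - 2 * expectation (Y i) * Y i x + (expectation (Y i))^2)" for i
    unfolding Z_def by (auto simp: power2_eq_square algebra_simps)
  have intZZ: "integrable M (\<lambda>x. Z i x * Z j x)" if "i \<in> A" "j \<in> A" for i j
  proof (cases "i = j")
    case True
    have "integrable M (\<lambda>x. (Y i x)^2 - 2 * expectation (Y i) * Y i x + (expectation (Y i))^2)"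
      using sq[OF that(1)] intY[OF that(1)] by auto
    then show ?thesis using True Zsq[of i] by simp
  next
    case False
    have "indep_var borel ((\<lambda>y. y - expectation (Y i)) \<circ> Y i) borel ((\<lambda>y. y - expectation (Y j)) \<circ> Y j)"
      by (rule indep_var_compose[OF ind[OF that False]]) auto
    then have "indep_var borel (Z i) borel (Z j)" by (simp add: Z_def[abs_def] comp_def)
    then show ?thesis by (intro indep_var_integrable intZ that)
  qed
  have EZZ: "expectation (\<lambda>x. Z i x * Z j x) = (if i = j then variance_of M (Y i) else 0)"
    if "i \<in> A" "j \<in> A" for i j
  proof (cases "i = j")
    case True
    then show ?thesis by (simp add: variance_of_def Z_def power2_eq_square)
  next
    case False
    have "indep_var borel ((\<lambda>y. y - expectation (Y i)) \<circ> Y i) borel ((\<lambda>y. y - expectation (Y j)) \<circ> Y j)"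
      by (rule indep_var_compose[OF ind[OF that False]]) auto
    then have "indep_var borel (Z i) borel (Z j)" by (simp add: Z_def[abs_def] comp_def)
    then have "expectation (\<lambda>x. Z i x * Z j x) = expectation (Z i) * expectation (Z j)"
      by (intro indep_var_lebesgue_integral intZ that)
    then show ?thesis using EZ that False by simp
  qed
  have Esum: "expectation (\<lambda>x. \<Sum>i\<in>A. c i * Y i x) = (\<Sum>i\<in>A. c i * expectation (Y i))"
    using intY by (simp add: integral_sum)
  have eq: "(\<lambda>x. ((\<Sum>i\<in>A. c i * Y i x) - expectation (\<lambda>x. \<Sum>i\<in>A. c i * Y i x))^2)
      = (\<lambda>x. \<Sum>i\<in>A. \<Sum>j\<in>A. c i * c j * (Z i x * Z j x))"
  proof
    fix x
    have "(\<Sum>i\<in>A. c i * Y i x) - expectation (\<lambda>x. \<Sum>i\<in>A. c i * Y i x) = (\<Sum>i\<in>A. c i * Z i x)"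
      unfolding Esum Z_def by (simp add: sum_subtractf[symmetric] algebra_simps)
    then show "((\<Sum>i\<in>A. c i * Y i x) - expectation (\<lambda>x. \<Sum>i\<in>A. c i * Y i x))^2
      = (\<Sum>i\<in>A. \<Sum>j\<in>A. c i * c j * (Z i x * Z j x))"
      by (simp add: power2_eq_square sum_product algebra_simps)
  qed
  have "variance_of M (\<lambda>x. \<Sum>i\<in>A. c i * Y i x) = (\<Sum>i\<in>A. \<Sum>j\<in>A. c i * c j * expectation (\<lambda>x. Z i x * Z j x))"
    unfolding variance_of_def eq using intZZ
    by (simp add: integral_sum integrable_sum)
  also have "\<dots> = (\<Sum>i\<in>A. \<Sum>j\<in>A. c i * c j * (if i = j then variance_of M (Y i) else 0))"
    by (intro sum.cong refl) (simp add: EZZ)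
  also have "\<dots> = (\<Sum>i\<in>A. (c i)^2 * variance_of M (Y i))"
    using fin by (simp add: power2_eq_square if_distrib cong: if_cong)
  finally show ?thesis .
qed

theorem theorem4:
  fixes M :: "'a measure" and X :: "real \<Rightarrow> 'a \<Rightarrow> real"
    and I :: "real set" and n N :: nat and \<beta> \<xi> t0 T \<mu> \<kappa> :: real
    and wq :: "nat \<Rightarrow> nat \<Rightarrow> real"
  assumes prob: "prob_space M"
    and I_open: "open I" and I_int: "is_interval I" and I_ne: "I \<noteq> {}"
    and I_pos: "I \<subseteq> {0..}"
    and beta: "\<beta> \<in> {-1, 1}" and Nn: "N \<ge> n" and xi: "\<xi> \<in> {0..1}"
    and t0: "t0 \<in> I" and T: "T > 0" and t0T: "t0 + \<beta> * T \<in> I"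
    and rv: "\<And>t. t \<ge> 0 \<Longrightarrow> X t \<in> borel_measurable M"
    and sq_int: "\<And>t. t \<ge> 0 \<Longrightarrow> integrable M (\<lambda>x. (X t x)^2)"
    and mean_cont: "continuous_on {0..} (\<lambda>t. LINT x|M. X t x)"
    and var_cont: "continuous_on {0..} (\<lambda>t. variance_of M (X t))"
    and indep: "\<And>s t. s \<ge> 0 \<Longrightarrow> t \<ge> 0 \<Longrightarrow> s \<noteq> t \<Longrightarrow>
                 prob_space.indep_var M borel (X s) borel (X t)"
    and w_pos: "\<And>m i. 0 < i \<Longrightarrow> i < m \<Longrightarrow> wq m i > 0"
    and w0: "\<And>m. wq m 0 \<ge> 0" and wm: "\<And>m. wq m m \<ge> 0"
    and w0_zero: "\<kappa> < 0 \<Longrightarrow> (\<forall>m. wq m 0 = 0)"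
    and wm_zero: "\<mu> < 0 \<Longrightarrow> (\<forall>m. wq m m = 0)"
    and w_bdd: "\<exists>C. \<forall>m i. i \<le> m \<longrightarrow> \<bar>wq m i\<bar> \<le> C"
    and w_conv: "(\<lambda>m. \<Sum>i=0..m. wq m i / real m
                       * (jkernel n N \<mu> \<kappa> \<xi> \<beta> T (real i / real m))^2)
                 \<longlonglongrightarrow> integral {0..1} (\<lambda>t. (jkernel n N \<mu> \<kappa> \<xi> \<beta> T t)^2)"
    and kappa: "\<kappa> > -1/2" and mu: "\<mu> > -1/2"
  shows "(\<lambda>m. variance_of M (noise_err n N \<mu> \<kappa> \<xi> \<beta> T wq X t0 m)) \<longlonglongrightarrow> 0"
proof -
  interpret prob_space M by (rule prob)
  obtain C where C: "\<And>m i. i \<le> m \<Longrightarrow> \<bar>wq m i\<bar> \<le> C" using w_bdd by blast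
  have C0: "0 \<le> C" using C[of 0 0] by simp
  define a where "a = min t0 (t0 + \<beta> * T)"
  define b where "b = max t0 (t0 + \<beta> * T)"
  have SI: "{a..b} \<subseteq> I"
  proof
    fix t assume t: "t \<in> {a..b}"
    show "t \<in> I"
    proof (cases "t0 \<le> t0 + \<beta> * T")
      case True
      then show ?thesis using t mem_is_interval_1_I[OF I_int t0 t0T] by (auto simp: a_def b_def)
    next
      case False
      then show ?thesis using t mem_is_interval_1_I[OF I_int t0T t0] by (auto simp: a_def b_def)
    qed
  qed
  have S0: "{a..b} \<subseteq> {0..}" using SI I_pos by blast
  have "compact ((\<lambda>t. variance_of M (X t)) ` {a..b})"
    by (rule compact_continuous_image[OF continuous_on_subset[OF var_cont S0]]) simp
  then obtain V where V: "\<And>t. t \<in> {a..b} \<Longrightarrow> \<bar>variance_of M (X t)\<bar> \<le> V"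
    using compact_imp_bounded bounded_real by (metis imageI)
  have V0: "0 \<le> V" using V[of a] by (simp add: a_def b_def) (meson abs_ge_zero order_trans V a_def b_def atLeastAtMost_iff min.cobounded1 max.cobounded1 min.bounded_iff max.bounded_iff order_refl)
  have varnn: "0 \<le> variance_of M f" for f
    unfolding variance_of_def by (intro integral_nonneg_AE) auto
  define s where "s m i = t0 + \<beta> * T * (real i / real m)" for m i :: nat
  define c where "c m i = wq m i / real m * jkernel n N \<mu> \<kappa> \<xi> \<beta> T (real i / real m)" for m i :: nat
  define k where "k m i = jkernel n N \<mu> \<kappa> \<xi> \<beta> T (real i / real m)" for m i :: nat
  have frac: "0 \<le> real i / real m \<and> real i / real m \<le> 1" if "i \<le> m" for i m :: nat
    using that by (cases "m = 0") (auto simp: divide_le_eq_1)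
  have sS: "s m i \<in> {a..b}" if "i \<le> m" for m i
  proof -
    from frac[OF that] have f: "0 \<le> real i / real m" "real i / real m \<le> 1" by auto
    have bb: "\<beta> = -1 \<or> \<beta> = 1" using beta by auto
    have g: "T * real i / real m \<le> T" using f T
      by (metis times_divide_eq_right mult_left_le less_imp_le)
    show ?thesis using bb f T g unfolding s_def a_def b_def
      by (auto simp: mult_le_cancel_left1 mult_le_cancel_left2 mult_less_cancel_left mult_le_cancel_left)
  qed
  have s0: "s m i \<ge> 0" if "i \<le> m" for m i using sS[OF that] S0 by auto
  have sinj: "s m i \<noteq> s m j" if "i \<le> m" "j \<le> m" "i \<noteq> j" for m i j
  proof -
    have m0: "real m \<noteq> 0" using that by auto
    have bT: "\<beta> * T \<noteq> 0" using beta T by auto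
    have "real i / real m \<noteq> real j / real m" using m0 that(3) by (simp add: divide_cancel_right)
    then show ?thesis unfolding s_def using bT by simp
  qed
  have wnn: "0 \<le> wq m i" if "i \<le> m" for m i
    using w_pos[of i m] w0[of m] wm[of m] that by (cases "i = 0"; cases "i = m") auto
  have var_eq: "variance_of M (noise_err n N \<mu> \<kappa> \<xi> \<beta> T wq X t0 m)
      = (\<Sum>i\<in>{0..m}. (c m i)^2 * variance_of M (X (s m i)))" for m
  proof -
    have e: "noise_err n N \<mu> \<kappa> \<xi> \<beta> T wq X t0 m = (\<lambda>x. \<Sum>i\<in>{0..m}. c m i * X (s m i) x)"
      by (simp add: noise_err_def c_def s_def fun_eq_iff)
    have "variance_of M (\<lambda>x. \<Sum>i\<in>{0..m}. c m i * X (s m i) x) = (\<Sum>i\<in>{0..m}. (c m i)^2 * variance_of M (X (s m i)))"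
      apply (rule var_sum)
      apply (auto intro!: rv sq_int indep s0)
      using sinj by blast
    then show ?thesis using e by simp
  qed
  define A where "A m = (\<Sum>i=0..m. wq m i / real m * (k m i)^2)" for m
  have bound: "variance_of M (noise_err n N \<mu> \<kappa> \<xi> \<beta> T wq X t0 m) \<le> C * V / real m * A m" for m
  proof -
    have "variance_of M (noise_err n N \<mu> \<kappa> \<xi> \<beta> T wq X t0 m)
        \<le> (\<Sum>i\<in>{0..m}. C * V / real m * (wq m i / real m * (k m i)^2))"
      unfolding var_eq
    proof (intro sum_mono)
      fix i assume i: "i \<in> {0..m}"
      then have im: "i \<le> m" by simp
      have vi: "0 \<le> variance_of M (X (s m i))" "variance_of M (X (s m i)) \<le> V"
        using varnn V[OF sS[OF im]] by auto
      have w: "0 \<le> wq m i" "wq m i \<le> C" using wnn[OF im] C[OF im] by auto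
      have "(c m i)^2 = (wq m i / real m) * (wq m i / real m) * (k m i)^2"
        by (simp add: c_def k_def power2_eq_square)
      also have "\<dots> \<le> (C / real m) * (wq m i / real m) * (k m i)^2"
        using w by (intro mult_right_mono divide_right_mono) auto
      finally have c2: "(c m i)^2 \<le> (C / real m) * (wq m i / real m) * (k m i)^2" .
      have "(c m i)^2 * variance_of M (X (s m i)) \<le> (C / real m) * (wq m i / real m) * (k m i)^2 * V"
        using c2 vi by (intro mult_mono) (auto intro!: mult_nonneg_nonneg divide_nonneg_nonneg C0 w)
      then show "(c m i)^2 * variance_of M (X (s m i)) \<le> C * V / real m * (wq m i / real m * (k m i)^2)"
        by (simp add: algebra_simps)
    qed
    also have "\<dots> = C * V / real m * A m" by (simp add: A_def sum_distrib_left)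
    finally show ?thesis .
  qed
  have Alim: "A \<longlonglongrightarrow> integral {0..1} (\<lambda>t. (jkernel n N \<mu> \<kappa> \<xi> \<beta> T t)^2)"
  proof -
    have "A = (\<lambda>m. \<Sum>i=0..m. wq m i / real m * (jkernel n N \<mu> \<kappa> \<xi> \<beta> T (real i / real m))^2)"
      by (simp add: A_def k_def fun_eq_iff)
    then show ?thesis using w_conv by simp
  qed
  have "(\<lambda>m. C * V / real m * A m) \<longlonglongrightarrow> 0 * integral {0..1} (\<lambda>t. (jkernel n N \<mu> \<kappa> \<xi> \<beta> T t)^2)"
    by (intro tendsto_mult Alim lim_const_over_n)
  then have up: "(\<lambda>m. C * V / real m * A m) \<longlonglongrightarrow> 0" by simp
  show ?thesis
    by (rule tendsto_sandwich[OF _ _ tendsto_const up]) (auto intro!: always_eventually varnn bound simp del: times_divide_eq_left times_divide_eq_right)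
qed

end
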